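(* Let $R_1$ and $R_2$ be finite commutative principal ideal rings with unity, and let $R=R_1\times R_2$. Suppose $\operatorname{diam}(\Gamma(R_1))=\operatorname{diam}(\Gamma(R_2))=0$. Then $\overline{\Gamma(R)}$ is a divisor graph if and only if at least one of $R_1$ and $R_2$ is an integral domain.
   Context: For a commutative ring $S$ with unity, $Z(S)$ denotes its set of zero divisors. The zero divisor graph $\Gamma(S)$ is the simple graph with vertex set $Z(S)\setminus\{0\}$, distinct $a,b$ adjacent iff $ab=0$; its complement $\overline{\Gamma(S)}$ has the same vertex set with distinct $a,b$ adjacent iff $ab\neq 0$. The diameter of a graph is the maximum distance (number of edges in a shortest path) between pairs of vertices. In the paper's usage, $\operatorname{diam}(\Gamma(S))=0$ means $\Gamma(S)$ has at most one vertex, i.e. $S$ has at most one nonzero zero divisor (this includes the case that $S$ is an integral domain). For a nonempty set $T$ of positive integers, the divisor graph $G(T)$ has vertex set $T$, with distinct $i,j$ adjacent iff $i\mid j$ or $j\mid i$; a graph is a divisor graph if it is isomorphic to some $G(T)$. *)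

theory Defs
  imports "HOL-Algebra.Algebra"
begin

definition principal_ideal_ring :: "('a, 'm) ring_scheme \<Rightarrow> bool" where
  "principal_ideal_ring R \<longleftrightarrow> cring R \<and> (\<forall>I. ideal I R \<longrightarrow> principalideal I R)"

definition zero_divisors :: "('a, 'm) ring_scheme \<Rightarrow> 'a set" where
  "zero_divisors R = {a \<in> carrier R. \<exists>b \<in> carrier R. b \<noteq> \<zero>\<^bsub>R\<^esub> \<and> a \<otimes>\<^bsub>R\<^esub> b = \<zero>\<^bsub>R\<^esub>}"

definition zdg_vertices :: "('a, 'm) ring_scheme \<Rightarrow> 'a set" where
  "zdg_vertices R = zero_divisors R - {\<zero>\<^bsub>R\<^esub>}"

definition zdg_adj :: "('a, 'm) ring_scheme \<Rightarrow> 'a \<Rightarrow> 'a \<Rightarrow> bool" where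
  "zdg_adj R a b \<longleftrightarrow> a \<in> zdg_vertices R \<and> b \<in> zdg_vertices R \<and> a \<noteq> b \<and> a \<otimes>\<^bsub>R\<^esub> b = \<zero>\<^bsub>R\<^esub>"

definition zdg_compl_adj :: "('a, 'm) ring_scheme \<Rightarrow> 'a \<Rightarrow> 'a \<Rightarrow> bool" where
  "zdg_compl_adj R a b \<longleftrightarrow> a \<in> zdg_vertices R \<and> b \<in> zdg_vertices R \<and> a \<noteq> b \<and> a \<otimes>\<^bsub>R\<^esub> b \<noteq> \<zero>\<^bsub>R\<^esub>"

text \<open>Paper's convention: diam(Gamma(S)) = 0 iff Gamma(S) has at most one vertex.\<close>
definition zdg_diam_zero :: "('a, 'm) ring_scheme \<Rightarrow> bool" where
  "zdg_diam_zero R \<longleftrightarrow> finite (zdg_vertices R) \<and> card (zdg_vertices R) \<le> 1"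

definition is_divisor_graph :: "'v set \<Rightarrow> ('v \<Rightarrow> 'v \<Rightarrow> bool) \<Rightarrow> bool" where
  "is_divisor_graph V adj \<longleftrightarrow>
     (\<exists>T :: nat set. T \<noteq> {} \<and> (\<forall>t \<in> T. 0 < t) \<and>
        (\<exists>f. bij_betw f V T \<and>
             (\<forall>x \<in> V. \<forall>y \<in> V. x \<noteq> y \<longrightarrow> (adj x y \<longleftrightarrow> (f x dvd f y \<or> f y dvd f x)))))"

end

theory Submission
  imports Defs "HOL-Computational_Algebra.Primes"
begin

lemma pd: "Factorial_Ring.prime (p::nat) \<Longrightarrow> p dvd x^i*y^j \<Longrightarrow> \<not> p dvd x \<Longrightarrow> \<not> p dvd y \<Longrightarrow> False"
  by (metis prime_dvd_mult_iff prime_dvd_power)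

lemma n1: "(3::nat)^(Suc i) dvd 2^j * 5^k \<Longrightarrow> False"
proof -
  assume h: "(3::nat)^(Suc i) dvd 2^j * 5^k"
  have "(3::nat) dvd 3^(Suc i)" by simp
  hence "(3::nat) dvd 2^j * 5^k" using h dvd_trans by blast
  thus False using pd[of 3 2 j 5 k] by simp
qed

lemma n2: "(2::nat)^(Suc i) dvd 3^j * 5^k \<Longrightarrow> False"
proof -
  assume h: "(2::nat)^(Suc i) dvd 3^j * 5^k"
  have "(2::nat) dvd 2^(Suc i)" by simp
  hence "(2::nat) dvd 3^j * 5^k" using h dvd_trans by blast
  thus False using pd[of 2 3 j 5 k] by simp
qed

lemma n3: "(5::nat) dvd 2^j * 3^k \<Longrightarrow> False"
  using pd[of 5 2 j 3 k] by simp

definition lp :: "nat \<Rightarrow> nat" where "lp i = 3^Suc i"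
definition lq :: "nat \<Rightarrow> nat \<Rightarrow> nat" where "lq k l = 2^Suc k * 3^Suc l"
definition ls :: "nat \<Rightarrow> nat" where "ls k = 2^Suc k * 5"
definition lu :: "nat \<Rightarrow> nat" where "lu j = 2^Suc j"

lemma l_pos: "0 < lp i" "0 < lq k l" "0 < ls k" "0 < lu j"
  by (simp_all add: lp_def lq_def ls_def lu_def)

lemma pp: "lp i dvd lp i' \<longleftrightarrow> i \<le> i'"
  unfolding lp_def by (simp add: dvd_power_iff_le)
lemma uu: "lu i dvd lu i' \<longleftrightarrow> i \<le> i'"
  unfolding lu_def by (simp add: dvd_power_iff_le)
lemma qq: "lq k l dvd lq k l' \<longleftrightarrow> l \<le> l'"
proof -
  have "lq k l dvd lq k l' \<longleftrightarrow> (3::nat)^Suc l dvd 3^Suc l'"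
    unfolding lq_def by (rule dvd_times_left_cancel_iff) simp
  thus ?thesis by (simp add: dvd_power_iff_le del: power_Suc)
qed
lemma pu: "\<not> lp i dvd lu j" "\<not> lu j dvd lp i"
  using n1[of i "Suc j" 0] n2[of j "Suc i" 0] by (auto simp: lp_def lu_def simp del: power_Suc)
lemma ps: "\<not> lp i dvd ls k" "\<not> ls k dvd lp i"
proof -
  show "\<not> lp i dvd ls k" using n1[of i "Suc k" 1] unfolding lp_def ls_def by auto
  show "\<not> ls k dvd lp i"
  proof
    assume "ls k dvd lp i"
    hence "(2::nat)^Suc k dvd 3^Suc i * 5^0" unfolding ls_def lp_def
      using dvd_mult_left by auto
    thus False using n2 by blast
  qed
qed
lemma pq: "i \<le> l \<Longrightarrow> lp i dvd lq k l" "\<not> lq k l dvd lp i"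
proof -
  assume "i \<le> l"
  hence "(3::nat)^Suc i dvd 3^Suc l" by (simp add: le_imp_power_dvd del: power_Suc)
  thus "lp i dvd lq k l" unfolding lp_def lq_def by (simp add: dvd_mult del: power_Suc)
next
  show "\<not> lq k l dvd lp i"
  proof
    assume "lq k l dvd lp i"
    hence "(2::nat)^Suc k dvd 3^Suc i * 5^0" unfolding lq_def lp_def
      using dvd_mult_left by auto
    thus False using n2 by blast
  qed
qed
lemma qs: "\<not> lq k l dvd ls k" "\<not> ls k dvd lq k l"
proof -
  show "\<not> lq k l dvd ls k"
  proof
    assume "lq k l dvd ls k"
    hence "(3::nat)^Suc l dvd 5" unfolding lq_def ls_def
      by (simp del: power_Suc)
    hence "(3::nat)^Suc l dvd 2^0 * 5^1" by simp
    thus False using n1 by blast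
  qed
  show "\<not> ls k dvd lq k l"
  proof
    assume "ls k dvd lq k l"
    hence "(5::nat) dvd 3^Suc l" unfolding lq_def ls_def
      by (simp del: power_Suc)
    hence "(5::nat) dvd 2^0 * 3^Suc l" by simp
    thus False using n3 by blast
  qed
qed
lemma qu: "j \<le> k \<Longrightarrow> lu j dvd lq k l" "\<not> lq k l dvd lu j"
proof -
  assume "j \<le> k"
  hence "(2::nat)^Suc j dvd 2^Suc k" by (simp add: le_imp_power_dvd del: power_Suc)
  thus "lu j dvd lq k l" unfolding lu_def lq_def by (simp add: dvd_mult2 del: power_Suc)
next
  show "\<not> lq k l dvd lu j"
  proof
    assume "lq k l dvd lu j"
    hence "(3::nat)^Suc l dvd 2^Suc j * 5^0" unfolding lq_def lu_def
      using dvd_mult_right by auto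
    thus False using n1 by blast
  qed
qed
lemma su: "j \<le> k \<Longrightarrow> lu j dvd ls k" "\<not> ls k dvd lu j"
proof -
  assume "j \<le> k"
  hence "(2::nat)^Suc j dvd 2^Suc k" by (simp add: le_imp_power_dvd del: power_Suc)
  thus "lu j dvd ls k" unfolding lu_def ls_def by (simp add: dvd_mult2 del: power_Suc)
next
  show "\<not> ls k dvd lu j"
  proof
    assume "ls k dvd lu j"
    hence "(5::nat) dvd 2^Suc j * 3^0" unfolding ls_def lu_def
      using dvd_mult_right by auto
    thus False using n3 by blast
  qed
qed

lemma l_inj: "lp i = lp i' \<longleftrightarrow> i = i'" "lu i = lu i' \<longleftrightarrow> i = i'" "lq k l = lq k l' \<longleftrightarrow> l = l'"
  using pp[of i i'] pp[of i' i] uu[of i i'] uu[of i' i] qq[of k l l'] qq[of k l' l] by auto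

lemma l_neq: "lp i \<noteq> lu j" "lp i \<noteq> ls k" "lp i \<noteq> lq k l" "lq k l \<noteq> ls k" "lq k l \<noteq> lu j"
  "ls k \<noteq> lu j"
  using pu[of i j] ps[of i k] pq(2)[of k l i] qs[of k l] qu(2)[of k l j] su(2)[of k j]
  by auto


definition zpat :: "('a,'m) ring_scheme \<Rightarrow> 'a set \<Rightarrow> bool" where
 "zpat R N \<longleftrightarrow> (\<forall>x\<in>carrier R. \<forall>y\<in>carrier R. (x \<otimes>\<^bsub>R\<^esub> y = \<zero>\<^bsub>R\<^esub> \<longleftrightarrow>
      x = \<zero>\<^bsub>R\<^esub> \<or> y = \<zero>\<^bsub>R\<^esub> \<or> (x \<in> N \<and> y \<in> N)))"

lemma rdp_zero: "\<zero>\<^bsub>RDirProd R S\<^esub> = (\<zero>\<^bsub>R\<^esub>, \<zero>\<^bsub>S\<^esub>)"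
  by (simp add: RDirProd_def DirProd_def monoid.defs)
lemma rdp_mult: "(a,b) \<otimes>\<^bsub>RDirProd R S\<^esub> (c,d) = (a \<otimes>\<^bsub>R\<^esub> c, b \<otimes>\<^bsub>S\<^esub> d)"
  by (simp add: RDirProd_def DirProd_def monoid.defs)

lemma ring_pat:
  fixes R (structure)
  assumes cr: "cring R" and one: "\<one>\<^bsub>R\<^esub> \<noteq> \<zero>\<^bsub>R\<^esub>" and dz: "zdg_diam_zero R"
  shows "(domain R \<and> zpat R {}) \<or> (\<not> domain R \<and> (\<exists>a\<in>carrier R. a \<noteq> \<zero>\<^bsub>R\<^esub> \<and> zpat R {a}))"
proof -
  interpret cring R by (rule cr)
  let ?V = "zdg_vertices R"
  have vmem: "x \<in> ?V \<longleftrightarrow> x \<in> carrier R \<and> x \<noteq> \<zero> \<and> (\<exists>b\<in>carrier R. b \<noteq> \<zero> \<and> x \<otimes> b = \<zero>)" for x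
    by (auto simp: zdg_vertices_def zero_divisors_def)
  have fin: "finite ?V" and c1: "card ?V \<le> Suc 0" using dz unfolding zdg_diam_zero_def by auto
  have uniq: "\<And>a b. a \<in> ?V \<Longrightarrow> b \<in> ?V \<Longrightarrow> a = b" using c1 fin card_le_Suc0_iff_eq by blast
  show ?thesis
  proof (cases "?V = {}")
    case True
    have zp: "zpat R {}" unfolding zpat_def
    proof (intro ballI)
      fix x y assume x: "x \<in> carrier R" and y: "y \<in> carrier R"
      show "(x \<otimes> y = \<zero>) = (x = \<zero> \<or> y = \<zero> \<or> x \<in> {} \<and> y \<in> {})"
      proof
        assume "x \<otimes> y = \<zero>"
        thus "x = \<zero> \<or> y = \<zero> \<or> x \<in> {} \<and> y \<in> {}" using True vmem[of x] x y by blast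
      qed (auto simp: x y)
    qed
    have "domain R"
      apply (rule domain.intro[OF cr])
      apply (rule domain_axioms.intro)
       apply (rule one)
      using zp unfolding zpat_def by blast
    thus ?thesis using zp by blast
  next
    case False
    then obtain a where aV: "a \<in> ?V" by blast
    have a: "a \<in> carrier R" "a \<noteq> \<zero>" using aV vmem by auto
    obtain c where c: "c \<in> carrier R" "c \<noteq> \<zero>" "a \<otimes> c = \<zero>" using aV vmem by auto
    have "c \<in> ?V" using vmem[of c] c a m_comm by auto
    hence ca: "c = a" using uniq aV by blast
    have aa: "a \<otimes> a = \<zero>" using c ca by simp
    have nd: "\<not> domain R"
    proof
      assume "domain R"
      hence "a = \<zero>" using domain.integral[of R a a] aa a by auto
      thus False using a by simp
    qed
    have zp: "zpat R {a}" unfolding zpat_def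
    proof (intro ballI)
      fix x y assume x: "x \<in> carrier R" and y: "y \<in> carrier R"
      show "(x \<otimes> y = \<zero>) = (x = \<zero> \<or> y = \<zero> \<or> x \<in> {a} \<and> y \<in> {a})"
      proof
        assume h: "x \<otimes> y = \<zero>"
        show "x = \<zero> \<or> y = \<zero> \<or> x \<in> {a} \<and> y \<in> {a}"
        proof (cases "x = \<zero> \<or> y = \<zero>")
          case False
          hence "x \<in> ?V" "y \<in> ?V" using vmem[of x] vmem[of y] x y h m_comm by auto
          thus ?thesis using uniq aV by blast
        qed blast
      qed (auto simp: x y aa)
    qed
    show ?thesis using nd zp a by blast
  qed
qed


lemma vert_char:
  assumes rA: "ring A" and rB: "ring B" and oA: "\<one>\<^bsub>A\<^esub> \<noteq> \<zero>\<^bsub>A\<^esub>" and oB: "\<one>\<^bsub>B\<^esub> \<noteq> \<zero>\<^bsub>B\<^esub>"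
    and pA: "zpat A NA" and pB: "zpat B NB" and sA: "NA \<subseteq> carrier A" and sB: "NB \<subseteq> carrier B"
  shows "(x,y) \<in> zdg_vertices (RDirProd A B) \<longleftrightarrow> x \<in> carrier A \<and> y \<in> carrier B \<and>
     (x,y) \<noteq> (\<zero>\<^bsub>A\<^esub>, \<zero>\<^bsub>B\<^esub>) \<and> (x = \<zero>\<^bsub>A\<^esub> \<or> x \<in> NA \<or> y = \<zero>\<^bsub>B\<^esub> \<or> y \<in> NB)"
proof -
  interpret A: ring A by (rule rA)
  interpret B: ring B by (rule rB)
  have zd: "(x,y) \<in> zdg_vertices (RDirProd A B) \<longleftrightarrow> x \<in> carrier A \<and> y \<in> carrier B \<and>
     (x,y) \<noteq> (\<zero>\<^bsub>A\<^esub>, \<zero>\<^bsub>B\<^esub>) \<and> (\<exists>x'\<in>carrier A. \<exists>y'\<in>carrier B. (x',y') \<noteq> (\<zero>\<^bsub>A\<^esub>, \<zero>\<^bsub>B\<^esub>)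
       \<and> x \<otimes>\<^bsub>A\<^esub> x' = \<zero>\<^bsub>A\<^esub> \<and> y \<otimes>\<^bsub>B\<^esub> y' = \<zero>\<^bsub>B\<^esub>)"
    by (auto simp: zdg_vertices_def zero_divisors_def RDirProd_carrier rdp_zero rdp_mult)
  show ?thesis
  proof
    assume h: "(x,y) \<in> zdg_vertices (RDirProd A B)"
    then obtain x' y' where x': "x' \<in> carrier A" "y' \<in> carrier B" "(x',y') \<noteq> (\<zero>\<^bsub>A\<^esub>, \<zero>\<^bsub>B\<^esub>)"
      "x \<otimes>\<^bsub>A\<^esub> x' = \<zero>\<^bsub>A\<^esub>" "y \<otimes>\<^bsub>B\<^esub> y' = \<zero>\<^bsub>B\<^esub>" and c: "x \<in> carrier A" "y \<in> carrier B"
      "(x,y) \<noteq> (\<zero>\<^bsub>A\<^esub>, \<zero>\<^bsub>B\<^esub>)" using zd by blast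
    have "x = \<zero>\<^bsub>A\<^esub> \<or> x \<in> NA \<or> y = \<zero>\<^bsub>B\<^esub> \<or> y \<in> NB"
      using pA pB x' c unfolding zpat_def by blast
    thus "x \<in> carrier A \<and> y \<in> carrier B \<and>
     (x,y) \<noteq> (\<zero>\<^bsub>A\<^esub>, \<zero>\<^bsub>B\<^esub>) \<and> (x = \<zero>\<^bsub>A\<^esub> \<or> x \<in> NA \<or> y = \<zero>\<^bsub>B\<^esub> \<or> y \<in> NB)" using c by blast
  next
    assume h: "x \<in> carrier A \<and> y \<in> carrier B \<and>
     (x,y) \<noteq> (\<zero>\<^bsub>A\<^esub>, \<zero>\<^bsub>B\<^esub>) \<and> (x = \<zero>\<^bsub>A\<^esub> \<or> x \<in> NA \<or> y = \<zero>\<^bsub>B\<^esub> \<or> y \<in> NB)"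
    have "\<exists>x'\<in>carrier A. \<exists>y'\<in>carrier B. (x',y') \<noteq> (\<zero>\<^bsub>A\<^esub>, \<zero>\<^bsub>B\<^esub>)
       \<and> x \<otimes>\<^bsub>A\<^esub> x' = \<zero>\<^bsub>A\<^esub> \<and> y \<otimes>\<^bsub>B\<^esub> y' = \<zero>\<^bsub>B\<^esub>"
    proof -
      have yz: "y \<otimes>\<^bsub>B\<^esub> \<zero>\<^bsub>B\<^esub> = \<zero>\<^bsub>B\<^esub>" using h B.r_null by blast
      have xz: "x \<otimes>\<^bsub>A\<^esub> \<zero>\<^bsub>A\<^esub> = \<zero>\<^bsub>A\<^esub>" using h A.r_null by blast
      consider "x = \<zero>\<^bsub>A\<^esub>" | "x \<in> NA" "x \<noteq> \<zero>\<^bsub>A\<^esub>" | "y = \<zero>\<^bsub>B\<^esub>" | "y \<in> NB" "y \<noteq> \<zero>\<^bsub>B\<^esub>"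
        using h by blast
      thus ?thesis
      proof cases
        case 1
        thus ?thesis using yz oA A.l_null A.one_closed B.zero_closed
          by (metis Pair_inject)
      next
        case 2
        hence "x \<otimes>\<^bsub>A\<^esub> x = \<zero>\<^bsub>A\<^esub>" using pA h unfolding zpat_def by blast
        thus ?thesis using yz 2 h B.zero_closed by (metis Pair_inject)
      next
        case 3
        thus ?thesis using xz oB B.l_null B.one_closed A.zero_closed
          by (metis Pair_inject)
      next
        case 4
        hence "y \<otimes>\<^bsub>B\<^esub> y = \<zero>\<^bsub>B\<^esub>" using pB h unfolding zpat_def by blast
        thus ?thesis using xz 4 h A.zero_closed by (metis Pair_inject)
      qed
    qed
    thus "(x,y) \<in> zdg_vertices (RDirProd A B)" using zd h by blast
  qed
qed

lemma adj_char:
  "zdg_compl_adj (RDirProd A B) (x,y) (x',y') \<longleftrightarrow> (x,y) \<in> zdg_vertices (RDirProd A B) \<and>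
    (x',y') \<in> zdg_vertices (RDirProd A B) \<and> (x,y) \<noteq> (x',y') \<and>
    (x \<otimes>\<^bsub>A\<^esub> x' \<noteq> \<zero>\<^bsub>A\<^esub> \<or> y \<otimes>\<^bsub>B\<^esub> y' \<noteq> \<zero>\<^bsub>B\<^esub>)"
  by (auto simp: zdg_compl_adj_def rdp_zero rdp_mult)


lemma rule3:
  fixes a b c :: nat
  assumes "a \<noteq> b" "c \<noteq> b" "a dvd b \<or> b dvd a" "c dvd b \<or> b dvd c" "\<not> a dvd c" "\<not> c dvd a"
  shows "(a dvd b \<longleftrightarrow> c dvd b) \<and> (b dvd a \<longleftrightarrow> b dvd c)"
  using assms dvd_trans dvd_antisym by metis

lemma chain_false:
  assumes dg: "is_divisor_graph V adj"
    and inV: "v1 \<in> V" "w \<in> V" "v2 \<in> V" "v3 \<in> V" "v4 \<in> V" "v5 \<in> V" "v6 \<in> V"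
    and dist: "distinct [v1,w,v2,v3,v4,v5,v6]"
    and a: "adj v1 w" "adj v1 v2" "adj v1 v3" "adj v3 v4" "adj v3 v5" "adj v5 v2" "adj v5 v6"
      "adj v6 v4" "adj v6 w"
    and n: "\<not> adj w v2" "\<not> adj v2 v3" "\<not> adj v1 v4" "\<not> adj v4 v5" "\<not> adj v2 v6"
      "\<not> adj v4 w" "\<not> adj v6 v1"
  shows False
proof -
  obtain T f where bij: "bij_betw f V (T::nat set)" and
    ad: "\<forall>x \<in> V. \<forall>y \<in> V. x \<noteq> y \<longrightarrow> (adj x y \<longleftrightarrow> (f x dvd f y \<or> f y dvd f x))"
    using dg unfolding is_divisor_graph_def by blast
  have inj: "inj_on f V" using bij bij_betw_def by blast
  have ne: "x \<in> V \<Longrightarrow> y \<in> V \<Longrightarrow> x \<noteq> y \<Longrightarrow> f x \<noteq> f y" for x y using inj inj_on_def by metis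
  have A: "x \<in> V \<Longrightarrow> y \<in> V \<Longrightarrow> x \<noteq> y \<Longrightarrow> adj x y \<Longrightarrow> f x dvd f y \<or> f y dvd f x" for x y
    using ad by blast
  have N: "x \<in> V \<Longrightarrow> y \<in> V \<Longrightarrow> x \<noteq> y \<Longrightarrow> \<not> adj x y \<Longrightarrow> \<not> f x dvd f y \<and> \<not> f y dvd f x" for x y
    using ad by blast
  have R: "f x dvd f y \<longleftrightarrow> f z dvd f y" "f y dvd f x \<longleftrightarrow> f y dvd f z"
    if "x \<in> V" "y \<in> V" "z \<in> V" "x \<noteq> y" "z \<noteq> y" "x \<noteq> z" "adj x y \<or> adj y x" "adj z y \<or> adj y z"
       "\<not> adj x z \<or> \<not> adj z x" for x y z
  proof -
    have h1: "f x dvd f y \<or> f y dvd f x" using that A[of x y] A[of y x] by metis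
    have h2: "f z dvd f y \<or> f y dvd f z" using that A[of z y] A[of y z] by metis
    have h3: "\<not> f x dvd f z \<and> \<not> f z dvd f x" using that N[of x z] N[of z x] by metis
    show "f x dvd f y \<longleftrightarrow> f z dvd f y" "f y dvd f x \<longleftrightarrow> f y dvd f z"
      using rule3[OF ne[of x y] ne[of z y] h1 h2] h3 that by auto
  qed
  have d: "v1 \<noteq> w" "v1 \<noteq> v2" "v1 \<noteq> v3" "v1 \<noteq> v4" "v1 \<noteq> v5" "v1 \<noteq> v6"
    "w \<noteq> v2" "w \<noteq> v3" "w \<noteq> v4" "w \<noteq> v5" "w \<noteq> v6" "v2 \<noteq> v3" "v2 \<noteq> v4" "v2 \<noteq> v5" "v2 \<noteq> v6"
    "v3 \<noteq> v4" "v3 \<noteq> v5" "v3 \<noteq> v6" "v4 \<noteq> v5" "v4 \<noteq> v6" "v5 \<noteq> v6" using dist by auto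
  have s1: "f v1 dvd f w \<longleftrightarrow> f v1 dvd f v2" using R(2)[of w v1 v2] inV d a n by auto
  have s2: "f v1 dvd f v2 \<longleftrightarrow> f v1 dvd f v3" using R(2)[of v2 v1 v3] inV d a n by auto
  have s3: "f v1 dvd f v3 \<longleftrightarrow> f v4 dvd f v3" using R(1)[of v1 v3 v4] inV d a n by auto
  have s4: "f v4 dvd f v3 \<longleftrightarrow> f v5 dvd f v3" using R(1)[of v4 v3 v5] inV d a n by auto
  have s5: "f v5 dvd f v3 \<longleftrightarrow> f v5 dvd f v2" using R(2)[of v3 v5 v2] inV d a n by auto
  have s6: "f v5 dvd f v2 \<longleftrightarrow> f v5 dvd f v6" using R(2)[of v2 v5 v6] inV d a n by auto
  have s7: "f v5 dvd f v6 \<longleftrightarrow> f v4 dvd f v6" using R(1)[of v5 v6 v4] inV d a n by auto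
  have s8: "f v4 dvd f v6 \<longleftrightarrow> f w dvd f v6" using R(1)[of v4 v6 w] inV d a n by auto
  have s9: "f w dvd f v6 \<longleftrightarrow> f w dvd f v1" using R(2)[of v6 w v1] inV d a n by auto
  have c: "f v1 dvd f w \<or> f w dvd f v1" using A[of v1 w] inV d a by auto
  have e: "f v1 \<noteq> f w" using ne[of v1 w] inV d by auto
  show False using s1 s2 s3 s4 s5 s6 s7 s8 s9 c e dvd_antisym by metis
qed

lemma dg_iso:
  assumes dg: "is_divisor_graph V adj" and h: "bij_betw h W V"
    and ad: "\<And>x y. x \<in> W \<Longrightarrow> y \<in> W \<Longrightarrow> adj' x y \<longleftrightarrow> adj (h x) (h y)"
  shows "is_divisor_graph W adj'"
proof -
  obtain T f where T: "T \<noteq> {}" "\<forall>t \<in> T. 0 < (t::nat)" and bij: "bij_betw f V T" and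
    fa: "\<forall>x \<in> V. \<forall>y \<in> V. x \<noteq> y \<longrightarrow> (adj x y \<longleftrightarrow> (f x dvd f y \<or> f y dvd f x))"
    using dg unfolding is_divisor_graph_def by blast
  have b2: "bij_betw (f \<circ> h) W T" using bij h bij_betw_trans by blast
  have "\<forall>x \<in> W. \<forall>y \<in> W. x \<noteq> y \<longrightarrow> (adj' x y \<longleftrightarrow> ((f \<circ> h) x dvd (f \<circ> h) y \<or> (f \<circ> h) y dvd (f \<circ> h) x))"
  proof (intro ballI impI)
    fix x y assume xy: "x \<in> W" "y \<in> W" "x \<noteq> y"
    have "h x \<noteq> h y" using h xy unfolding bij_betw_def inj_on_def by blast
    moreover have "h x \<in> V" "h y \<in> V" using h xy bij_betw_apply by metis+
    ultimately show "adj' x y \<longleftrightarrow> ((f \<circ> h) x dvd (f \<circ> h) y \<or> (f \<circ> h) y dvd (f \<circ> h) x)"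
      using fa ad[OF xy(1,2)] by simp
  qed
  thus ?thesis unfolding is_divisor_graph_def using T b2 by blast
qed


lemma pos:
  assumes rA: "ring A" and rB: "ring B" and oA: "\<one>\<^bsub>A\<^esub> \<noteq> \<zero>\<^bsub>A\<^esub>" and oB: "\<one>\<^bsub>B\<^esub> \<noteq> \<zero>\<^bsub>B\<^esub>"
    and pA: "zpat A {}" and pB: "zpat B NB" and sB: "NB \<subseteq> carrier B"
    and NBu: "\<And>b b'. b \<in> NB \<Longrightarrow> b' \<in> NB \<Longrightarrow> b = b'" and z: "\<zero>\<^bsub>B\<^esub> \<notin> NB"
    and fA: "finite (carrier A)" and fB: "finite (carrier B)"
  shows "is_divisor_graph (zdg_vertices (RDirProd A B)) (zdg_compl_adj (RDirProd A B))"
proof -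
  let ?V = "zdg_vertices (RDirProd A B)"
  let ?adj = "zdg_compl_adj (RDirProd A B)"
  have Vc: "(x,y) \<in> ?V \<longleftrightarrow> x \<in> carrier A \<and> y \<in> carrier B \<and> (x,y) \<noteq> (\<zero>\<^bsub>A\<^esub>, \<zero>\<^bsub>B\<^esub>) \<and>
      (x = \<zero>\<^bsub>A\<^esub> \<or> y = \<zero>\<^bsub>B\<^esub> \<or> y \<in> NB)" for x y
    using vert_char[OF rA rB oA oB pA pB _ sB, of x y] by auto
  have Ac: "?adj (x,y) (x',y') \<longleftrightarrow> (x \<noteq> \<zero>\<^bsub>A\<^esub> \<and> x' \<noteq> \<zero>\<^bsub>A\<^esub>) \<or>
      (y \<noteq> \<zero>\<^bsub>B\<^esub> \<and> y' \<noteq> \<zero>\<^bsub>B\<^esub> \<and> \<not> (y \<in> NB \<and> y' \<in> NB))"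
    if "(x,y) \<in> ?V" "(x',y') \<in> ?V" "(x,y) \<noteq> (x',y')" for x y x' y'
  proof -
    have c: "x \<in> carrier A" "y \<in> carrier B" "x' \<in> carrier A" "y' \<in> carrier B" using that Vc by auto
    have zx: "x \<otimes>\<^bsub>A\<^esub> x' = \<zero>\<^bsub>A\<^esub> \<longleftrightarrow> x = \<zero>\<^bsub>A\<^esub> \<or> x' = \<zero>\<^bsub>A\<^esub> \<or> (x \<in> {} \<and> x' \<in> {})"
      using pA c unfolding zpat_def by blast
    have zy: "y \<otimes>\<^bsub>B\<^esub> y' = \<zero>\<^bsub>B\<^esub> \<longleftrightarrow> y = \<zero>\<^bsub>B\<^esub> \<or> y' = \<zero>\<^bsub>B\<^esub> \<or> (y \<in> NB \<and> y' \<in> NB)"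
      using pB c unfolding zpat_def by blast
    show ?thesis unfolding adj_char using that zx zy by simp
  qed
  obtain e and n :: nat where e: "e ` carrier A = {i. i < n}" "inj_on e (carrier A)"
    using finite_imp_inj_to_nat_seg[OF fA] by blast
  obtain g and m :: nat where g: "g ` carrier B = {i. i < m}" "inj_on g (carrier B)"
    using finite_imp_inj_to_nat_seg[OF fB] by blast
  have eb: "x \<in> carrier A \<Longrightarrow> e x < n" for x using e by auto
  have gb: "y \<in> carrier B \<Longrightarrow> g y < m" for y using g by auto
  have ei: "x \<in> carrier A \<Longrightarrow> x' \<in> carrier A \<Longrightarrow> e x = e x' \<longleftrightarrow> x = x'" for x x'
    using e(2) inj_on_def by metis
  have gi: "y \<in> carrier B \<Longrightarrow> y' \<in> carrier B \<Longrightarrow> g y = g y' \<longleftrightarrow> y = y'" for y y'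
    using g(2) inj_on_def by metis
  define f where "f p = (case p of (x,y) \<Rightarrow> if y = \<zero>\<^bsub>B\<^esub> then lp (e x)
     else if x = \<zero>\<^bsub>A\<^esub> \<and> y \<notin> NB then lu (g y) else if x = \<zero>\<^bsub>A\<^esub> then ls m else lq m (n + e x))" for p
  have key: "f (x,y) \<noteq> f (x',y') \<and> (?adj (x,y) (x',y') \<longleftrightarrow> (f (x,y) dvd f (x',y') \<or> f (x',y') dvd f (x,y)))"
    if V: "(x,y) \<in> ?V" "(x',y') \<in> ?V" and ne: "(x,y) \<noteq> (x',y')" for x y x' y'
  proof -
    have c: "x \<in> carrier A" "y \<in> carrier B" "x' \<in> carrier A" "y' \<in> carrier B" using V Vc by auto
    have b: "e x < n" "e x' < n" "g y \<le> m" "g y' \<le> m" using c eb gb less_imp_le by auto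
    have b2: "e x \<le> n + e x'" "e x' \<le> n + e x" using b by auto
    have xy: "(y = \<zero>\<^bsub>B\<^esub>) \<or> (y \<noteq> \<zero>\<^bsub>B\<^esub> \<and> x = \<zero>\<^bsub>A\<^esub> \<and> y \<notin> NB) \<or>
      (y \<noteq> \<zero>\<^bsub>B\<^esub> \<and> x = \<zero>\<^bsub>A\<^esub> \<and> y \<in> NB) \<or> (y \<noteq> \<zero>\<^bsub>B\<^esub> \<and> x \<noteq> \<zero>\<^bsub>A\<^esub> \<and> y \<in> NB)"
      using V Vc by auto
    have xy': "(y' = \<zero>\<^bsub>B\<^esub>) \<or> (y' \<noteq> \<zero>\<^bsub>B\<^esub> \<and> x' = \<zero>\<^bsub>A\<^esub> \<and> y' \<notin> NB) \<or>
      (y' \<noteq> \<zero>\<^bsub>B\<^esub> \<and> x' = \<zero>\<^bsub>A\<^esub> \<and> y' \<in> NB) \<or> (y' \<noteq> \<zero>\<^bsub>B\<^esub> \<and> x' \<noteq> \<zero>\<^bsub>A\<^esub> \<and> y' \<in> NB)"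
      using V Vc by auto
    note A = Ac[OF V ne]
    have f1: "y = \<zero>\<^bsub>B\<^esub> \<Longrightarrow> f (x,y) = lp (e x)"
      "y \<noteq> \<zero>\<^bsub>B\<^esub> \<Longrightarrow> x = \<zero>\<^bsub>A\<^esub> \<Longrightarrow> y \<notin> NB \<Longrightarrow> f (x,y) = lu (g y)"
      "y \<noteq> \<zero>\<^bsub>B\<^esub> \<Longrightarrow> x = \<zero>\<^bsub>A\<^esub> \<Longrightarrow> y \<in> NB \<Longrightarrow> f (x,y) = ls m"
      "y \<noteq> \<zero>\<^bsub>B\<^esub> \<Longrightarrow> x \<noteq> \<zero>\<^bsub>A\<^esub> \<Longrightarrow> f (x,y) = lq m (n + e x)"
      by (simp_all add: f_def)
    have f2: "y' = \<zero>\<^bsub>B\<^esub> \<Longrightarrow> f (x',y') = lp (e x')"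
      "y' \<noteq> \<zero>\<^bsub>B\<^esub> \<Longrightarrow> x' = \<zero>\<^bsub>A\<^esub> \<Longrightarrow> y' \<notin> NB \<Longrightarrow> f (x',y') = lu (g y')"
      "y' \<noteq> \<zero>\<^bsub>B\<^esub> \<Longrightarrow> x' = \<zero>\<^bsub>A\<^esub> \<Longrightarrow> y' \<in> NB \<Longrightarrow> f (x',y') = ls m"
      "y' \<noteq> \<zero>\<^bsub>B\<^esub> \<Longrightarrow> x' \<noteq> \<zero>\<^bsub>A\<^esub> \<Longrightarrow> f (x',y') = lq m (n + e x')"
      by (simp_all add: f_def)
    have V1: "(x,y) \<noteq> (\<zero>\<^bsub>A\<^esub>, \<zero>\<^bsub>B\<^esub>)" "(x',y') \<noteq> (\<zero>\<^bsub>A\<^esub>, \<zero>\<^bsub>B\<^esub>)" using V Vc by auto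
    have EI: "e x = e x' \<longleftrightarrow> x = x'" using ei[OF c(1) c(3)] .
    have GI: "g y = g y' \<longleftrightarrow> y = y'" using gi[OF c(2) c(4)] .
    from xy show ?thesis
    proof (elim disjE conjE)
      assume y0: "y = \<zero>\<^bsub>B\<^esub>"
      from xy' show ?thesis
      proof (elim disjE conjE)
        assume "y' = \<zero>\<^bsub>B\<^esub>" thus ?thesis using y0 A f1 f2 V1 ne EI l_inj pp by auto
      next
        assume "y' \<noteq> \<zero>\<^bsub>B\<^esub>" "x' = \<zero>\<^bsub>A\<^esub>" "y' \<notin> NB" thus ?thesis using y0 A f1 f2 V1 l_neq l_neq[THEN not_sym] pu by auto
      next
        assume "y' \<noteq> \<zero>\<^bsub>B\<^esub>" "x' = \<zero>\<^bsub>A\<^esub>" "y' \<in> NB" thus ?thesis using y0 A f1 f2 V1 l_neq l_neq[THEN not_sym] ps by auto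
      next
        assume "y' \<noteq> \<zero>\<^bsub>B\<^esub>" "x' \<noteq> \<zero>\<^bsub>A\<^esub>" "y' \<in> NB" thus ?thesis using y0 A f1 f2 V1 l_neq l_neq[THEN not_sym] pq(1)[OF b2(1)] pq(2) by auto
      qed
    next
      assume y0: "y \<noteq> \<zero>\<^bsub>B\<^esub>" "x = \<zero>\<^bsub>A\<^esub>" "y \<notin> NB"
      from xy' show ?thesis
      proof (elim disjE conjE)
        assume "y' = \<zero>\<^bsub>B\<^esub>" thus ?thesis using y0 A f1 f2 V1 l_neq l_neq[THEN not_sym] pu by auto
      next
        assume "y' \<noteq> \<zero>\<^bsub>B\<^esub>" "x' = \<zero>\<^bsub>A\<^esub>" "y' \<notin> NB" thus ?thesis using y0 A f1 f2 ne GI l_inj uu by auto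
      next
        assume "y' \<noteq> \<zero>\<^bsub>B\<^esub>" "x' = \<zero>\<^bsub>A\<^esub>" "y' \<in> NB" thus ?thesis using y0 A f1 f2 l_neq l_neq[THEN not_sym] su(1)[OF b(3)] su(2) by auto
      next
        assume "y' \<noteq> \<zero>\<^bsub>B\<^esub>" "x' \<noteq> \<zero>\<^bsub>A\<^esub>" "y' \<in> NB" thus ?thesis using y0 A f1 f2 l_neq l_neq[THEN not_sym] qu(1)[OF b(3)] qu(2) by auto
      qed
    next
      assume y0: "y \<noteq> \<zero>\<^bsub>B\<^esub>" "x = \<zero>\<^bsub>A\<^esub>" "y \<in> NB"
      from xy' show ?thesis
      proof (elim disjE conjE)
        assume "y' = \<zero>\<^bsub>B\<^esub>" thus ?thesis using y0 A f1 f2 V1 l_neq l_neq[THEN not_sym] ps by auto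
      next
        assume "y' \<noteq> \<zero>\<^bsub>B\<^esub>" "x' = \<zero>\<^bsub>A\<^esub>" "y' \<notin> NB" thus ?thesis using y0 A f1 f2 l_neq l_neq[THEN not_sym] su(1)[OF b(4)] su(2) by auto
      next
        assume "y' \<noteq> \<zero>\<^bsub>B\<^esub>" "x' = \<zero>\<^bsub>A\<^esub>" "y' \<in> NB" thus ?thesis using y0 ne NBu by auto
      next
        assume "y' \<noteq> \<zero>\<^bsub>B\<^esub>" "x' \<noteq> \<zero>\<^bsub>A\<^esub>" "y' \<in> NB" thus ?thesis using y0 A f1 f2 l_neq l_neq[THEN not_sym] qs by auto
      qed
    next
      assume y0: "y \<noteq> \<zero>\<^bsub>B\<^esub>" "x \<noteq> \<zero>\<^bsub>A\<^esub>" "y \<in> NB"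
      from xy' show ?thesis
      proof (elim disjE conjE)
        assume "y' = \<zero>\<^bsub>B\<^esub>" thus ?thesis using y0 A f1 f2 V1 l_neq l_neq[THEN not_sym] pq(1)[OF b2(2)] pq(2) by auto
      next
        assume "y' \<noteq> \<zero>\<^bsub>B\<^esub>" "x' = \<zero>\<^bsub>A\<^esub>" "y' \<notin> NB" thus ?thesis using y0 A f1 f2 l_neq l_neq[THEN not_sym] qu(1)[OF b(4)] qu(2) by auto
      next
        assume "y' \<noteq> \<zero>\<^bsub>B\<^esub>" "x' = \<zero>\<^bsub>A\<^esub>" "y' \<in> NB" thus ?thesis using y0 A f1 f2 l_neq l_neq[THEN not_sym] qs by auto
      next
        assume h: "y' \<noteq> \<zero>\<^bsub>B\<^esub>" "x' \<noteq> \<zero>\<^bsub>A\<^esub>" "y' \<in> NB"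
        have "y = y'" using NBu h y0 by blast
        hence "x \<noteq> x'" using ne by blast
        thus ?thesis using y0 h A f1 f2 EI l_inj qq by auto
      qed
    qed
  qed
  have inj: "inj_on f ?V"
    unfolding inj_on_def using key by fast
  have Vne: "(\<one>\<^bsub>A\<^esub>, \<zero>\<^bsub>B\<^esub>) \<in> ?V" using Vc oA rA rB ring.ring_simprules(6) ring.ring_simprules(2) by auto
  show ?thesis unfolding is_divisor_graph_def
  proof (intro exI conjI)
    show "f ` ?V \<noteq> {}" using Vne by blast
    show "\<forall>t \<in> f ` ?V. 0 < t" unfolding f_def using l_pos by auto
    show "bij_betw f ?V (f ` ?V)" using inj inj_on_imp_bij_betw by blast
    show "\<forall>p\<in>?V. \<forall>q\<in>?V. p \<noteq> q \<longrightarrow> (?adj p q \<longleftrightarrow> (f p dvd f q \<or> f q dvd f p))"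
      using key by fast
  qed
qed


lemma swap_dg:
  assumes rA: "ring A" and rB: "ring B" and oA: "\<one>\<^bsub>A\<^esub> \<noteq> \<zero>\<^bsub>A\<^esub>" and oB: "\<one>\<^bsub>B\<^esub> \<noteq> \<zero>\<^bsub>B\<^esub>"
    and pA: "zpat A NA" and pB: "zpat B NB" and sA: "NA \<subseteq> carrier A" and sB: "NB \<subseteq> carrier B"
    and dg: "is_divisor_graph (zdg_vertices (RDirProd B A)) (zdg_compl_adj (RDirProd B A))"
  shows "is_divisor_graph (zdg_vertices (RDirProd A B)) (zdg_compl_adj (RDirProd A B))"
proof (rule dg_iso[OF dg, where h = "\<lambda>(x,y). (y,x)"])
  note V1 = vert_char[OF rA rB oA oB pA pB sA sB]
  note V2 = vert_char[OF rB rA oB oA pB pA sB sA]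
  show "bij_betw (\<lambda>(x, y). (y, x)) (zdg_vertices (RDirProd A B)) (zdg_vertices (RDirProd B A))"
    by (rule bij_betw_byWitness[where f' = "\<lambda>(x,y). (y,x)"]) (auto simp: V1 V2)
  fix p q assume "p \<in> zdg_vertices (RDirProd A B)" "q \<in> zdg_vertices (RDirProd A B)"
  thus "zdg_compl_adj (RDirProd A B) p q = zdg_compl_adj (RDirProd B A) ((\<lambda>(x, y). (y, x)) p) ((\<lambda>(x, y). (y, x)) q)"
    by (cases p, cases q) (auto simp: adj_char V1 V2)
qed

theorem theorem2p2:
  fixes R1 :: "('a, 'm) ring_scheme" and R2 :: "('b, 'n) ring_scheme"
  assumes "principal_ideal_ring R1" and "finite (carrier R1)" and "\<one>\<^bsub>R1\<^esub> \<noteq> \<zero>\<^bsub>R1\<^esub>"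
    and "principal_ideal_ring R2" and "finite (carrier R2)" and "\<one>\<^bsub>R2\<^esub> \<noteq> \<zero>\<^bsub>R2\<^esub>"
    and "zdg_diam_zero R1" and "zdg_diam_zero R2"
  shows "is_divisor_graph (zdg_vertices (RDirProd R1 R2)) (zdg_compl_adj (RDirProd R1 R2))
         \<longleftrightarrow> (domain R1 \<or> domain R2)"
proof -
  have c1: "cring R1" using assms(1) principal_ideal_ring_def by blast
  have c2: "cring R2" using assms(4) principal_ideal_ring_def by blast
  have r1: "ring R1" using c1 cring_def by blast
  have r2: "ring R2" using c2 cring_def by blast
  note o1 = assms(3) and o2 = assms(6)
  have P1: "(domain R1 \<and> zpat R1 {}) \<or> (\<not> domain R1 \<and> (\<exists>a\<in>carrier R1. a \<noteq> \<zero>\<^bsub>R1\<^esub> \<and> zpat R1 {a}))"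
    using ring_pat[OF c1 o1 assms(7)] .
  have P2: "(domain R2 \<and> zpat R2 {}) \<or> (\<not> domain R2 \<and> (\<exists>a\<in>carrier R2. a \<noteq> \<zero>\<^bsub>R2\<^esub> \<and> zpat R2 {a}))"
    using ring_pat[OF c2 o2 assms(8)] .
  show ?thesis
  proof (cases "domain R1")
    case True
    hence z1: "zpat R1 {}" using P1 by blast
    have "is_divisor_graph (zdg_vertices (RDirProd R1 R2)) (zdg_compl_adj (RDirProd R1 R2))"
    proof (cases "domain R2")
      case True
      hence z2: "zpat R2 {}" using P2 by blast
      show ?thesis by (rule pos[OF r1 r2 o1 o2 z1 z2 _ _ _ assms(2) assms(5)]) auto
    next
      case False
      then obtain b where b: "b \<in> carrier R2" "b \<noteq> \<zero>\<^bsub>R2\<^esub>" "zpat R2 {b}" using P2 by blast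
      show ?thesis by (rule pos[OF r1 r2 o1 o2 z1 b(3) _ _ _ assms(2) assms(5)]) (use b in auto)
    qed
    thus ?thesis using True by blast
  next
    case nd1: False
    then obtain a where a: "a \<in> carrier R1" "a \<noteq> \<zero>\<^bsub>R1\<^esub>" "zpat R1 {a}" using P1 by blast
    show ?thesis
    proof (cases "domain R2")
      case True
      hence z2: "zpat R2 {}" using P2 by blast
      have dg21: "is_divisor_graph (zdg_vertices (RDirProd R2 R1)) (zdg_compl_adj (RDirProd R2 R1))"
        by (rule pos[OF r2 r1 o2 o1 z2 a(3) _ _ _ assms(5) assms(2)]) (use a in auto)
      have "is_divisor_graph (zdg_vertices (RDirProd R1 R2)) (zdg_compl_adj (RDirProd R1 R2))"
        by (rule swap_dg[OF r1 r2 o1 o2 a(3) z2 _ _ dg21]) (use a in auto)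
      thus ?thesis using True by blast
    next
      case nd2: False
      then obtain b where b: "b \<in> carrier R2" "b \<noteq> \<zero>\<^bsub>R2\<^esub>" "zpat R2 {b}" using P2 by blast
      interpret A: cring R1 by (rule c1)
      interpret B: cring R2 by (rule c2)
      have aa: "a \<otimes>\<^bsub>R1\<^esub> a = \<zero>\<^bsub>R1\<^esub>" using a unfolding zpat_def by blast
      have bb: "b \<otimes>\<^bsub>R2\<^esub> b = \<zero>\<^bsub>R2\<^esub>" using b unfolding zpat_def by blast
      have a1: "a \<noteq> \<one>\<^bsub>R1\<^esub>" using aa o1 by auto
      have b1: "b \<noteq> \<one>\<^bsub>R2\<^esub>" using bb o2 by auto
      note V = vert_char[OF r1 r2 o1 o2 a(3) b(3)]
      let ?V = "zdg_vertices (RDirProd R1 R2)"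
      let ?adj = "zdg_compl_adj (RDirProd R1 R2)"
      note S = V adj_char aa bb a b a(2)[symmetric] b(2)[symmetric] a1 b1 a1[symmetric] b1[symmetric] o1 o2 o1[symmetric] o2[symmetric]
      have "\<not> is_divisor_graph ?V ?adj"
      proof
        assume dg: "is_divisor_graph ?V ?adj"
        show False
        proof (rule chain_false[OF dg, of "(\<zero>\<^bsub>R1\<^esub>, \<one>\<^bsub>R2\<^esub>)" "(a,b)" "(\<zero>\<^bsub>R1\<^esub>, b)"
              "(\<one>\<^bsub>R1\<^esub>, b)" "(a, \<zero>\<^bsub>R2\<^esub>)" "(a, \<one>\<^bsub>R2\<^esub>)" "(\<one>\<^bsub>R1\<^esub>, \<zero>\<^bsub>R2\<^esub>)"])
        qed (simp_all add: S)
      qed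
      thus ?thesis using nd1 nd2 by blast
    qed
  qed
qed

end
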